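(* Let $f:\mathbb R^n\to\mathbb R$ be an integrable log-concave function with full-dimensional support. Then for any $t\in(0,1)$ and any $x\in\mathrm{supp}\,f-\mathrm{supp}\,f$, $$\mathcal A_t(f)(x)\subseteq\tfrac12x+\mathcal A_t(f)(0).$$ Consequently, $M_t(f)=|\mathcal A_t(f)(0)|$.
   Context: Let $\bar f(x)=f(-x)$. For $t\in(0,1]$ and $x\in\mathrm{supp}\,f-\mathrm{supp}\,f$, $\mathcal A_t(f)(x)=\{z\in\mathrm{supp}\,f\cap(x+\mathrm{supp}\,f): f(z)f(z-x)\geq t\Vert f\Vert_\infty^2\}$ (so $\mathcal A_t(f)(0)=\{z: f(z)\geq\sqrt t\Vert f\Vert_\infty\}$), and $M_t(f)=\max_{x_0\in\mathrm{supp}\,f-\mathrm{supp}\,f}|\mathcal A_t(f)(x_0)|$, with $|\cdot|$ Lebesgue volume. *)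

theory Defs
  imports "HOL-Analysis.Analysis"
begin

definition log_concave :: "('a::real_vector \<Rightarrow> real) \<Rightarrow> bool" where
  "log_concave f \<longleftrightarrow> (\<forall>x. f x \<ge> 0) \<and>
     (\<forall>x y (l::real). 0 < l \<and> l < 1 \<longrightarrow>
        f ((1 - l) *\<^sub>R x + l *\<^sub>R y) \<ge> f x powr (1 - l) * f y powr l)"

definition supp :: "('a \<Rightarrow> real) \<Rightarrow> 'a set" where
  "supp f = {x. f x > 0}"

definition sup_norm :: "('a \<Rightarrow> real) \<Rightarrow> real" where
  "sup_norm f = (SUP x. \<bar>f x\<bar>)"

definition A_set :: "real \<Rightarrow> ('a::real_vector \<Rightarrow> real) \<Rightarrow> 'a \<Rightarrow> 'a set" where
  "A_set t f x = {z \<in> supp f \<inter> ((\<lambda>w. x + w) ` supp f).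
                   f z * f (z - x) \<ge> t * (sup_norm f)\<^sup>2}"

definition M_t :: "real \<Rightarrow> ('a::euclidean_space \<Rightarrow> real) \<Rightarrow> ennreal" where
  "M_t t f = (SUP x0 \<in> {a - b | a b. a \<in> supp f \<and> b \<in> supp f}.
                 emeasure lebesgue (A_set t f x0))"

end

theory Submission
  imports Defs
begin

lemma incl_aux:
  fixes f :: "'a::euclidean_space \<Rightarrow> real"
  assumes lc: "log_concave f" and z: "z \<in> A_set t f x"
  shows "z \<in> (\<lambda>z. (1/2) *\<^sub>R x + z) ` A_set t f 0"
proof -
  have nn: "\<And>y. f y \<ge> 0" using lc by (simp add: log_concave_def)
  have fz: "f z > 0" and fzx: "f (z - x) > 0" and ge: "f z * f (z - x) \<ge> t * (sup_norm f)\<^sup>2"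
    using z by (auto simp: A_set_def supp_def)
  define w where "w = z - (1/2) *\<^sub>R x"
  have eq: "(1 - 1/2) *\<^sub>R z + (1/2) *\<^sub>R (z - x) = w"
    unfolding w_def by (simp add: algebra_simps scaleR_diff_right flip: scaleR_add_left)
  have "f w \<ge> f z powr (1 - 1/2) * f (z - x) powr (1/2)"
    using lc unfolding log_concave_def eq[symmetric] by (metis (no_types) field_sum_of_halves less_add_same_cancel1 zero_less_divide_1_iff zero_less_numeral)
  hence fw: "f w \<ge> sqrt (f z) * sqrt (f (z - x))"
    using fz fzx by (simp add: powr_half_sqrt)
  have pos: "sqrt (f z) * sqrt (f (z - x)) > 0" using fz fzx by simp
  have "f z * f (z - x) = (sqrt (f z) * sqrt (f (z - x))) * (sqrt (f z) * sqrt (f (z - x)))"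
    using fz fzx by (simp add: algebra_simps)
  also have "\<dots> \<le> f w * f w"
    using fw pos by (intro mult_mono) auto
  finally have "f w * f w \<ge> t * (sup_norm f)\<^sup>2" using ge by linarith
  moreover have "f w > 0" using fw pos by linarith
  ultimately have "w \<in> A_set t f 0" by (auto simp: A_set_def supp_def)
  moreover have "z = (1/2) *\<^sub>R x + w" unfolding w_def by simp
  ultimately show ?thesis by blast
qed

theorem lemma3p6:
  fixes f :: "'a::euclidean_space \<Rightarrow> real"
  assumes "log_concave f"
    and "integrable lebesgue f"
    and "interior (supp f) \<noteq> {}"
  shows "(\<forall>t x. 0 < t \<and> t < 1 \<and> x \<in> {a - b | a b. a \<in> supp f \<and> b \<in> supp f} \<longrightarrow>
            A_set t f x \<subseteq> (\<lambda>z. (1/2) *\<^sub>R x + z) ` A_set t f 0)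
       \<and> (\<forall>t. 0 < t \<and> t < 1 \<longrightarrow> M_t t f = emeasure lebesgue (A_set t f 0))"
proof -
  have incl: "\<And>t x. A_set t f x \<subseteq> (\<lambda>z. (1/2) *\<^sub>R x + z) ` A_set t f 0"
    using incl_aux[OF assms(1)] by blast
  have fm: "f \<in> borel_measurable lebesgue" using assms(2) by auto
  have A0: "\<And>t. A_set t f 0 = {z \<in> space lebesgue. 0 < f z \<and> t * (sup_norm f)\<^sup>2 \<le> f z * f z}"
    by (auto simp: A_set_def supp_def)
  have A0m: "\<And>t. A_set t f 0 \<in> sets lebesgue"
    unfolding A0 using fm by measurable
  have tr: "\<And>t x. emeasure lebesgue ((\<lambda>z. (1/2) *\<^sub>R x + z) ` A_set t f 0) = emeasure lebesgue (A_set t f 0)"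
  proof -
    fix t and x :: 'a
    show "emeasure lebesgue ((\<lambda>z. (1/2) *\<^sub>R x + z) ` A_set t f 0) = emeasure lebesgue (A_set t f 0)"
      using emeasure_lebesgue_affine[of 1 "(1/2) *\<^sub>R x" "A_set t f 0"]
      by (simp add: add.commute cong: image_cong_simp)
  qed
  have trm: "\<And>t x. (\<lambda>z. (1/2) *\<^sub>R x + z) ` A_set t f 0 \<in> sets lebesgue"
    using lebesgue_sets_translation[OF A0m] by blast
  have le: "\<And>t x. emeasure lebesgue (A_set t f x) \<le> emeasure lebesgue (A_set t f 0)"
    using emeasure_mono[OF incl trm] tr by metis
  obtain p where p: "p \<in> supp f" using assms(3) interior_subset by blast
  have z0: "(0::'a) \<in> {a - b | a b. a \<in> supp f \<and> b \<in> supp f}"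
    using p by (auto intro!: exI[of _ p])
  have M: "\<And>t. M_t t f = emeasure lebesgue (A_set t f 0)"
    unfolding M_t_def
    by (rule antisym, rule SUP_least, rule le, rule SUP_upper2[OF z0], simp)
  show ?thesis using incl M by blast
qed

end
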